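(* Let $\kappa$ be a kernel and $\delta>0$. There is $\gamma>0$ such that, for every sequence $(A_n)$ of non-negative symmetric $n\times n$ matrices with $\delta_\square(A_n,\kappa)\to0$, with high probability every set of at most $\gamma n$ vertices of $G(A_n)$ meets at most $\delta n$ edges.
   Context: A kernel is an integrable symmetric measurable $\kappa:[0,1]^2\to[0,\infty)$ (Lebesgue measure). For $A_n=(a_{ij})$, $\kappa_{A_n}$ equals $a_{ij}$ on $((i-1)/n,i/n]\times((j-1)/n,j/n]$. Cut norm $\|W\|_\square=\sup_{S,T}|\int_{S\times T}W|$; $\delta_\square(A_n,\kappa)=\inf_\tau\|\kappa_{A_n}-\kappa^\tau\|_\square$ over measure-preserving bijections $\tau$ of $[0,1]$. $G(A_n)$: random graph on $[n]$, independent edges, $ij$ present with probability $\min\{a_{ij}/n,1\}$. A vertex set meets an edge if it contains at least one endpoint of it. *)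

theory Defs
  imports "HOL-Probability.Probability"
begin

text \<open>A kernel: integrable, symmetric, non-negative, measurable on the unit square.
  Kernels are functions real => real => real; only values on [0,1]^2 matter.\<close>
definition is_kernel :: "(real \<Rightarrow> real \<Rightarrow> real) \<Rightarrow> bool" where
  "is_kernel \<kappa> \<longleftrightarrow>
     set_integrable lborel ({0..1} \<times> {0..1}) (\<lambda>(x, y). \<kappa> x y) \<and>
     (\<forall>x\<in>{0..1}. \<forall>y\<in>{0..1}. \<kappa> x y = \<kappa> y x \<and> 0 \<le> \<kappa> x y)"

definition unit_interval :: "real measure" where
  "unit_interval = restrict_space lborel {0..1}"

definition measure_preserving :: "'a measure \<Rightarrow> 'b measure \<Rightarrow> ('a \<Rightarrow> 'b) set" where
  "measure_preserving M N = {f \<in> M \<rightarrow>\<^sub>M N. \<forall>B\<in>sets N. emeasure M (f -` B \<inter> space M) = emeasure N B}"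

definition mp_bij :: "(real \<Rightarrow> real) \<Rightarrow> bool" where
  "mp_bij \<tau> \<longleftrightarrow> bij_betw \<tau> {0..1} {0..1} \<and>
     \<tau> \<in> measure_preserving unit_interval unit_interval \<and>
     inv_into {0..1} \<tau> \<in> measure_preserving unit_interval unit_interval"

definition cut_norm :: "(real \<Rightarrow> real \<Rightarrow> real) \<Rightarrow> real" where
  "cut_norm W = Sup {\<bar>set_lebesgue_integral lborel (S \<times> T) (\<lambda>(x, y). W x y)\<bar> | S T.
      S \<in> sets lborel \<and> T \<in> sets lborel \<and> S \<subseteq> {0..1} \<and> T \<subseteq> {0..1}}"

text \<open>Step kernel of an n x n matrix A (indices 1..n): value A i j on
  ((i-1)/n, i/n] x ((j-1)/n, j/n], and 0 off (0,1]^2.\<close>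
definition step_kernel :: "nat \<Rightarrow> (nat \<Rightarrow> nat \<Rightarrow> real) \<Rightarrow> real \<Rightarrow> real \<Rightarrow> real" where
  "step_kernel n A x y =
     (if 0 < x \<and> x \<le> 1 \<and> 0 < y \<and> y \<le> 1
      then A (nat \<lceil>real n * x\<rceil>) (nat \<lceil>real n * y\<rceil>) else 0)"

definition cut_dist :: "nat \<Rightarrow> (nat \<Rightarrow> nat \<Rightarrow> real) \<Rightarrow> (real \<Rightarrow> real \<Rightarrow> real) \<Rightarrow> real" where
  "cut_dist n A \<kappa> = Inf {cut_norm (\<lambda>x y. step_kernel n A x y - \<kappa> (\<tau> x) (\<tau> y)) | \<tau>. mp_bij \<tau>}"

definition vpairs :: "nat \<Rightarrow> (nat \<times> nat) set" where
  "vpairs n = {(i, j). 1 \<le> i \<and> i < j \<and> j \<le> n}"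

text \<open>The random graph G(A): independent edges, ij present w.p. min(a_ij/n, 1).
  A graph is given by its edge indicator on vpairs n (False elsewhere).\<close>
definition rand_graph :: "nat \<Rightarrow> (nat \<Rightarrow> nat \<Rightarrow> real) \<Rightarrow> (nat \<times> nat \<Rightarrow> bool) pmf" where
  "rand_graph n A = Pi_pmf (vpairs n) False
      (\<lambda>(i, j). bernoulli_pmf (min (A i j / real n) 1))"

definition edges_met :: "nat \<Rightarrow> (nat \<times> nat \<Rightarrow> bool) \<Rightarrow> nat set \<Rightarrow> nat" where
  "edges_met n e S = card {(i, j) \<in> vpairs n. e (i, j) \<and> (i \<in> S \<or> j \<in> S)}"

end

theory Submission
  imports Defs
begin


definition ibox :: "nat \<Rightarrow> nat \<Rightarrow> real set" where
  "ibox n i = {(real i - 1) / real n <.. real i / real n}"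

lemma ceil_range:
  assumes "n > 0" "0 < x" "x \<le> 1"
  shows "nat \<lceil>real n * x\<rceil> \<in> {1..n}"
proof -
  have "real n * x > 0" using assms by simp
  hence a: "\<lceil>real n * x\<rceil> \<ge> 1" by (simp add: zero_less_ceiling)
  have b: "real n * x \<le> real n" using assms by (simp add: mult_left_le)
  hence "\<lceil>real n * x\<rceil> \<le> int n" by (simp add: ceiling_le_iff)
  with a b show ?thesis by (auto simp: le_nat_iff)
qed

lemma in_box_iff:
  assumes "n > 0" "i \<in> {1..n}"
  shows "x \<in> ibox n i \<longleftrightarrow> (0 < x \<and> x \<le> 1 \<and> nat \<lceil>real n * x\<rceil> = i)"
proof
  assume "x \<in> ibox n i"
  hence h: "(real i - 1) / real n < x" "x \<le> real i / real n" by (auto simp: ibox_def)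
  hence h2: "real i - 1 < real n * x" "real n * x \<le> real i" using assms
    by (auto simp: field_simps)
  hence "\<lceil>real n * x\<rceil> = int i" by (intro ceiling_unique) auto
  moreover have "0 < x" using h(1) assms by (smt (verit, ccfv_SIG) atLeastAtMost_iff divide_nonneg_nonneg of_nat_0_le_iff of_nat_1 of_nat_mono)
  moreover have "x \<le> 1" using h(2) assms
    by (smt (verit, best) atLeastAtMost_iff divide_le_eq_1_pos of_nat_0_less_iff of_nat_mono)
  ultimately show "0 < x \<and> x \<le> 1 \<and> nat \<lceil>real n * x\<rceil> = i" by simp
next
  assume h: "0 < x \<and> x \<le> 1 \<and> nat \<lceil>real n * x\<rceil> = i"
  have "real n * x > 0" using assms h by simp
  hence "\<lceil>real n * x\<rceil> \<ge> 1" by (simp add: zero_less_ceiling)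
  hence c: "\<lceil>real n * x\<rceil> = int i" using h by auto
  have "real n * x \<le> real i" using c by (metis ceiling_le_iff order_refl of_int_of_nat_eq)
  moreover have "real i - 1 < real n * x" using c
    by (metis ceiling_correct of_int_of_nat_eq of_int_1 of_int_diff ceiling_diff_one) 
  ultimately show "x \<in> ibox n i" using assms by (auto simp: ibox_def field_simps)
qed

lemma indicator_box:
  assumes "n > 0" "i \<in> {1..n}"
  shows "indicator (ibox n i) x = (if 0 < x \<and> x \<le> 1 \<and> nat \<lceil>real n * x\<rceil> = i then 1 else (0::real))"
  using in_box_iff[OF assms] by (simp add: indicator_def)

lemma step_kernel_sum:
  assumes "n > 0"
  shows "step_kernel n A x y = (\<Sum>i\<in>{1..n}. \<Sum>j\<in>{1..n}. A i j * indicator (ibox n i \<times> ibox n j) (x, y))"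
proof (cases "0 < x \<and> x \<le> 1 \<and> 0 < y \<and> y \<le> 1")
  case True
  have "(\<Sum>i\<in>{1..n}. \<Sum>j\<in>{1..n}. A i j * indicator (ibox n i \<times> ibox n j) (x, y))
     = (\<Sum>i\<in>{1..n}. if nat \<lceil>real n * x\<rceil> = i then (\<Sum>j\<in>{1..n}. if nat \<lceil>real n * y\<rceil> = j then A i j else 0) else 0)"
  proof (intro sum.cong refl)
    fix i assume i: "i \<in> {1..n}"
    have "A i j * indicator (ibox n i \<times> ibox n j) (x, y) = (if nat \<lceil>real n * x\<rceil> = i then (if nat \<lceil>real n * y\<rceil> = j then A i j else 0) else 0)"
      if "j \<in> {1..n}" for j
      using True indicator_box[OF assms i, of x] indicator_box[OF assms that, of y]
      by (simp add: indicator_times)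
    hence "(\<Sum>j\<in>{1..n}. A i j * indicator (ibox n i \<times> ibox n j) (x, y)) =
       (\<Sum>j\<in>{1..n}. if nat \<lceil>real n * x\<rceil> = i then (if nat \<lceil>real n * y\<rceil> = j then A i j else 0) else 0)"
      by (intro sum.cong refl) 
    also have "\<dots> = (if nat \<lceil>real n * x\<rceil> = i then (\<Sum>j\<in>{1..n}. if nat \<lceil>real n * y\<rceil> = j then A i j else 0) else 0)"
      by (cases "nat \<lceil>real n * x\<rceil> = i") simp_all
    finally show "(\<Sum>j\<in>{1..n}. A i j * indicator (ibox n i \<times> ibox n j) (x, y)) = (if nat \<lceil>real n * x\<rceil> = i then (\<Sum>j\<in>{1..n}. if nat \<lceil>real n * y\<rceil> = j then A i j else 0) else 0)" .
  qed
  also have "\<dots> = step_kernel n A x y"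
  proof -
    have cx: "nat \<lceil>real n * x\<rceil> \<in> {1..n}" and cy: "nat \<lceil>real n * y\<rceil> \<in> {1..n}"
      using True ceil_range[OF assms, of x] ceil_range[OF assms, of y] by auto
    have "(\<Sum>j\<in>{1..n}. if nat \<lceil>real n * y\<rceil> = j then A i j else 0) = A i (nat \<lceil>real n * y\<rceil>)" for i
      using cy by (subst sum.delta') auto
    hence "(\<Sum>i\<in>{1..n}. if nat \<lceil>real n * x\<rceil> = i then (\<Sum>j\<in>{1..n}. if nat \<lceil>real n * y\<rceil> = j then A i j else 0) else 0)
       = (\<Sum>i\<in>{1..n}. if nat \<lceil>real n * x\<rceil> = i then A i (nat \<lceil>real n * y\<rceil>) else 0)" by simp
    also have "\<dots> = A (nat \<lceil>real n * x\<rceil>) (nat \<lceil>real n * y\<rceil>)"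
      using cx by (subst sum.delta') auto
    finally show ?thesis using True by (simp add: step_kernel_def)
  qed
  finally show ?thesis by simp
next
  case False
  then have "A i j * indicator (ibox n i \<times> ibox n j) (x, y) = 0" if "i \<in> {1..n}" "j \<in> {1..n}" for i j
    using that by (auto simp: indicator_times indicator_box[OF assms])
  then have "(\<Sum>i\<in>{1..n}. \<Sum>j\<in>{1..n}. A i j * indicator (ibox n i \<times> ibox n j) (x, y)) = 0"
    by (intro sum.neutral ballI) simp
  moreover have "step_kernel n A x y = 0" using False unfolding step_kernel_def by (simp only: if_False)
  ultimately show ?thesis by simp
qed




lemma box_sets[measurable]: "ibox n i \<in> sets lborel"
  by (simp add: ibox_def)

lemma box_borel[measurable]: "ibox n i \<in> sets borel"
  by (simp add: ibox_def)

lemma emeasure_box: "n > 0 \<Longrightarrow> emeasure lborel (ibox n i) = ennreal (1 / real n)"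
  by (simp add: ibox_def diff_divide_distrib)

lemma emeasure_box2:
  assumes "n > 0"
  shows "emeasure (lborel :: (real \<times> real) measure) (ibox n i \<times> ibox n j) = ennreal (1 / real n ^ 2)"
proof -
  have "emeasure (lborel :: (real \<times> real) measure) (ibox n i \<times> ibox n j)
      = emeasure (lborel \<Otimes>\<^sub>M lborel) (ibox n i \<times> ibox n j)" by (simp add: lborel_prod)
  also have "\<dots> = emeasure lborel (ibox n i) * emeasure lborel (ibox n j)"
    by (intro lborel.emeasure_pair_measure_Times) auto
  also have "\<dots> = ennreal (1 / real n ^ 2)" using assms
    by (simp add: emeasure_box ennreal_mult[symmetric] power2_eq_square)
  finally show ?thesis .
qed

lemma box2_sets[measurable]: "ibox n i \<times> ibox n j \<in> sets (lborel :: (real \<times> real) measure)"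
proof -
  have "ibox n i \<times> ibox n j \<in> sets (lborel \<Otimes>\<^sub>M lborel)" by (intro pair_measureI) auto
  thus ?thesis by (simp only: lborel_prod)
qed

lemma integrable_box2: "n > 0 \<Longrightarrow> integrable (lborel :: (real \<times> real) measure) (indicator (ibox n i \<times> ibox n j) :: _ \<Rightarrow> real)"
  using emeasure_box2[of n i j] by (intro integrable_real_indicator box2_sets) auto

lemma integral_box2: "n > 0 \<Longrightarrow> integral\<^sup>L (lborel :: (real \<times> real) measure) (indicator (ibox n i \<times> ibox n j) :: _ \<Rightarrow> real) = 1 / real n ^ 2"
  using emeasure_box2[of n i j] by (simp add: measure_def)

lemma box_sum:
  assumes "n > 0" "S \<subseteq> {1..n}"
  shows "(\<Sum>i\<in>S. \<Sum>j\<in>{1..n}. f i j * indicator (ibox n i \<times> ibox n j) (x, y))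
     = (if 0 < x \<and> x \<le> 1 \<and> 0 < y \<and> y \<le> 1 \<and> nat \<lceil>real n * x\<rceil> \<in> S then f (nat \<lceil>real n * x\<rceil>) (nat \<lceil>real n * y\<rceil>) else (0::real))"
proof (cases "0 < x \<and> x \<le> 1 \<and> 0 < y \<and> y \<le> 1")
  case True
  have cx: "nat \<lceil>real n * x\<rceil> \<in> {1..n}" and cy: "nat \<lceil>real n * y\<rceil> \<in> {1..n}"
    using True ceil_range[OF assms(1), of x] ceil_range[OF assms(1), of y] by auto
  have "(\<Sum>i\<in>S. \<Sum>j\<in>{1..n}. f i j * indicator (ibox n i \<times> ibox n j) (x, y))
     = (\<Sum>i\<in>S. if nat \<lceil>real n * x\<rceil> = i then (\<Sum>j\<in>{1..n}. if nat \<lceil>real n * y\<rceil> = j then f i j else 0) else 0)"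
  proof (intro sum.cong refl)
    fix i assume i': "i \<in> S"
    hence i: "i \<in> {1..n}" using assms by auto
    have "f i j * indicator (ibox n i \<times> ibox n j) (x, y) = (if nat \<lceil>real n * x\<rceil> = i then (if nat \<lceil>real n * y\<rceil> = j then f i j else 0) else 0)"
      if "j \<in> {1..n}" for j
      using True indicator_box[OF assms(1) i, of x] indicator_box[OF assms(1) that, of y]
      by (simp add: indicator_times)
    hence "(\<Sum>j\<in>{1..n}. f i j * indicator (ibox n i \<times> ibox n j) (x, y)) =
       (\<Sum>j\<in>{1..n}. if nat \<lceil>real n * x\<rceil> = i then (if nat \<lceil>real n * y\<rceil> = j then f i j else 0) else 0)"
      by (intro sum.cong refl) 
    also have "\<dots> = (if nat \<lceil>real n * x\<rceil> = i then (\<Sum>j\<in>{1..n}. if nat \<lceil>real n * y\<rceil> = j then f i j else 0) else 0)"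
      by (cases "nat \<lceil>real n * x\<rceil> = i") simp_all
    finally show "(\<Sum>j\<in>{1..n}. f i j * indicator (ibox n i \<times> ibox n j) (x, y)) = (if nat \<lceil>real n * x\<rceil> = i then (\<Sum>j\<in>{1..n}. if nat \<lceil>real n * y\<rceil> = j then f i j else 0) else 0)" .
  qed
  also have "\<dots> = (\<Sum>i\<in>S. if nat \<lceil>real n * x\<rceil> = i then f i (nat \<lceil>real n * y\<rceil>) else 0)"
    using cy by (intro sum.cong refl) (subst sum.delta', auto)
  also have "\<dots> = (if nat \<lceil>real n * x\<rceil> \<in> S then f (nat \<lceil>real n * x\<rceil>) (nat \<lceil>real n * y\<rceil>) else 0)"
    using assms finite_subset[OF assms(2)] by (subst sum.delta') auto
  finally show ?thesis using True by simp
next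
  case False
  then have "f i j * indicator (ibox n i \<times> ibox n j) (x, y) = 0" if "i \<in> S" "j \<in> {1..n}" for i j
    using that assms by (auto simp: indicator_times indicator_box[OF assms(1)])
  then have "(\<Sum>i\<in>S. \<Sum>j\<in>{1..n}. f i j * indicator (ibox n i \<times> ibox n j) (x, y)) = 0"
    by (intro sum.neutral ballI) simp
  moreover have "(if 0 < x \<and> x \<le> 1 \<and> 0 < y \<and> y \<le> 1 \<and> nat \<lceil>real n * x\<rceil> \<in> S then f (nat \<lceil>real n * x\<rceil>) (nat \<lceil>real n * y\<rceil>) else (0::real)) = 0"
    using False by auto
  ultimately show ?thesis by metis
qed

definition TS :: "nat \<Rightarrow> nat set \<Rightarrow> real set" where
  "TS n S = (\<Union>i\<in>S. ibox n i)"

lemma TS_sets[measurable]: "finite S \<Longrightarrow> TS n S \<in> sets lborel"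
  unfolding TS_def by (intro sets.finite_UN) auto

lemma in_TS_iff:
  assumes "n > 0" "S \<subseteq> {1..n}"
  shows "x \<in> TS n S \<longleftrightarrow> 0 < x \<and> x \<le> 1 \<and> nat \<lceil>real n * x\<rceil> \<in> S"
proof -
  have "x \<in> TS n S \<longleftrightarrow> (\<exists>i\<in>S. x \<in> ibox n i)" by (simp add: TS_def)
  also have "\<dots> \<longleftrightarrow> (\<exists>i\<in>S. 0 < x \<and> x \<le> 1 \<and> nat \<lceil>real n * x\<rceil> = i)"
    using assms(2) by (intro bex_cong refl in_box_iff[OF assms(1)]) auto
  also have "\<dots> \<longleftrightarrow> 0 < x \<and> x \<le> 1 \<and> nat \<lceil>real n * x\<rceil> \<in> S" by auto
  finally show ?thesis .
qed

lemma TS_sub: "n > 0 \<Longrightarrow> S \<subseteq> {1..n} \<Longrightarrow> TS n S \<subseteq> {0..1}"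
  using in_TS_iff by fastforce

lemma step_TS:
  assumes "n > 0" "S \<subseteq> {1..n}"
  shows "indicator (TS n S \<times> {0<..1::real}) (x, y) * step_kernel n A x y
      = (\<Sum>i\<in>S. \<Sum>j\<in>{1..n}. A i j * indicator (ibox n i \<times> ibox n j) (x, y))"
  by (subst box_sum[OF assms]) (auto simp: in_TS_iff[OF assms] indicator_times step_kernel_def indicator_def)

lemma ind_TS:
  assumes "n > 0" "S \<subseteq> {1..n}"
  shows "indicator (TS n S \<times> {0<..1::real}) (x, y)
      = (\<Sum>i\<in>S. \<Sum>j\<in>{1..n}. 1 * indicator (ibox n i \<times> ibox n j) (x, y) :: real)"
  by (subst box_sum[OF assms]) (auto simp: in_TS_iff[OF assms] indicator_times indicator_def)

lemma integrable_rowsum: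
  assumes "n > 0"
  shows "integrable (lborel :: (real \<times> real) measure) (\<lambda>z. \<Sum>j\<in>{1..n}. (f j::real) * indicator (ibox n i \<times> ibox n j) z)"
proof (rule Bochner_Integration.integrable_sum)
  fix j show "integrable lborel (\<lambda>z. f j * indicator (ibox n i \<times> ibox n j) z)"
    using integrable_box2[OF assms, of i j] by (intro integrable_mult_right) auto
qed

lemma integrable_boxsum:
  assumes "n > 0"
  shows "integrable (lborel :: (real \<times> real) measure) (\<lambda>z. \<Sum>i\<in>S. \<Sum>j\<in>{1..n}. (f i j::real) * indicator (ibox n i \<times> ibox n j) z)"
proof (rule Bochner_Integration.integrable_sum)
  fix i show "integrable lborel (\<lambda>z. \<Sum>j\<in>{1..n}. f i j * indicator (ibox n i \<times> ibox n j) z)"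
  proof (rule Bochner_Integration.integrable_sum)
    fix j show "integrable lborel (\<lambda>z. f i j * indicator (ibox n i \<times> ibox n j) z)"
      using integrable_box2[OF assms, of i j] by (intro integrable_mult_right) auto
  qed
qed

lemma integral_boxsum:
  assumes "n > 0" "finite S"
  shows "integral\<^sup>L (lborel :: (real \<times> real) measure) (\<lambda>z. \<Sum>i\<in>S. \<Sum>j\<in>{1..n}. (f i j::real) * indicator (ibox n i \<times> ibox n j) z)
    = (\<Sum>i\<in>S. \<Sum>j\<in>{1..n}. f i j) / real n ^ 2"
proof -
  have "integral\<^sup>L (lborel :: (real \<times> real) measure) (\<lambda>z. \<Sum>i\<in>S. \<Sum>j\<in>{1..n}. (f i j::real) * indicator (ibox n i \<times> ibox n j) z)
     = (\<Sum>i\<in>S. integral\<^sup>L lborel (\<lambda>z. \<Sum>j\<in>{1..n}. (f i j::real) * indicator (ibox n i \<times> ibox n j) z))"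
    by (rule Bochner_Integration.integral_sum) (rule integrable_rowsum[OF assms(1)])
  also have "\<dots> = (\<Sum>i\<in>S. \<Sum>j\<in>{1..n}. integral\<^sup>L lborel (\<lambda>z. (f i j::real) * indicator (ibox n i \<times> ibox n j) z))"
    using integrable_box2[OF assms(1)] by (intro sum.cong refl Bochner_Integration.integral_sum) (intro integrable_mult_right, auto)
  also have "\<dots> = (\<Sum>i\<in>S. \<Sum>j\<in>{1..n}. f i j / real n ^ 2)"
    by (intro sum.cong refl) (simp only: integral_mult_right_zero integral_box2[OF assms(1)], simp)
  finally show ?thesis by (simp add: sum_divide_distrib)
qed

lemma step_integrable:
  assumes "n > 0"
  shows "integrable lborel (\<lambda>(x, y). step_kernel n A x y)"
proof -
  have "(\<lambda>(x, y). step_kernel n A x y) = (\<lambda>z. \<Sum>i\<in>{1..n}. \<Sum>j\<in>{1..n}. A i j * indicator (ibox n i \<times> ibox n j) z)"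
    using step_kernel_sum[OF assms] by auto
  thus ?thesis using integrable_boxsum[OF assms] by simp
qed

lemma integral_step_TS:
  assumes "n > 0" "S \<subseteq> {1..n}"
  shows "integral\<^sup>L lborel (\<lambda>z. indicator (TS n S \<times> {0<..1::real}) z * (\<lambda>(x, y). step_kernel n A x y) z)
     = (\<Sum>i\<in>S. \<Sum>j\<in>{1..n}. A i j) / real n ^ 2"
proof -
  have "(\<lambda>z. indicator (TS n S \<times> {0<..1::real}) z * (\<lambda>(x, y). step_kernel n A x y) z) = (\<lambda>z. \<Sum>i\<in>S. \<Sum>j\<in>{1..n}. A i j * indicator (ibox n i \<times> ibox n j) z)"
    using step_TS[OF assms] by auto
  thus ?thesis using integral_boxsum[OF assms(1) finite_subset[OF assms(2)]] by simp
qed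

lemma integral_ind_TS:
  assumes "n > 0" "S \<subseteq> {1..n}"
  shows "integral\<^sup>L lborel (\<lambda>z. indicator (TS n S \<times> {0<..1::real}) z :: real) = real (card S) / real n"
    and "integrable lborel (\<lambda>z. indicator (TS n S \<times> {0<..1::real}) z :: real)"
proof -
  have e: "(\<lambda>z. indicator (TS n S \<times> {0<..1::real}) z :: real) = (\<lambda>z. \<Sum>i\<in>S. \<Sum>j\<in>{1..n}. 1 * indicator (ibox n i \<times> ibox n j) z)"
    using ind_TS[OF assms] by auto
  show "integral\<^sup>L lborel (\<lambda>z. indicator (TS n S \<times> {0<..1::real}) z :: real) = real (card S) / real n"
  proof -
    have "integral\<^sup>L lborel (\<lambda>z. \<Sum>i\<in>S. \<Sum>j\<in>{1..n}. 1 * indicator (ibox n i \<times> ibox n j) z :: real) = (\<Sum>i\<in>S. \<Sum>j\<in>{1..n}. 1) / real n ^ 2"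
      by (rule integral_boxsum[OF assms(1) finite_subset[OF assms(2)]]) simp
    also have "\<dots> = real (card S) / real n" using assms(1) by (simp add: power2_eq_square)
    finally have I: "integral\<^sup>L lborel (\<lambda>z. \<Sum>i\<in>S. \<Sum>j\<in>{1..n}. 1 * indicator (ibox n i \<times> ibox n j) z :: real) = real (card S) / real n" .
    show "integral\<^sup>L lborel (\<lambda>z. indicator (TS n S \<times> {0<..1::real}) z :: real) = real (card S) / real n"
      by (simp only: e I)
  qed
  show "integrable lborel (\<lambda>z. indicator (TS n S \<times> {0<..1::real}) z :: real)"
    unfolding e by (rule integrable_boxsum[OF assms(1)])
qed




definition extend :: "(real \<Rightarrow> real) \<Rightarrow> real \<Rightarrow> real" where
  "extend \<tau> x = (if x \<in> {0..1} then \<tau> x else x)"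

lemma sets_Q: "A \<in> sets unit_interval \<longleftrightarrow> A \<subseteq> {0..1} \<and> A \<in> sets lborel"
  unfolding unit_interval_def by (rule sets_restrict_space_iff) simp

lemma space_Q: "space unit_interval = {0..1}"
  unfolding unit_interval_def by simp

lemma emeasure_Q: "A \<subseteq> {0..1} \<Longrightarrow> emeasure unit_interval A = emeasure lborel A"
  unfolding unit_interval_def by (rule emeasure_restrict_space) auto

lemma mp_bij_range: "mp_bij \<tau> \<Longrightarrow> x \<in> {0..1} \<Longrightarrow> \<tau> x \<in> {0..1}"
  unfolding mp_bij_def by (meson bij_betw_apply)

lemma ext_preimage:
  assumes "\<And>x. x \<in> {0..1} \<Longrightarrow> \<tau> x \<in> {0..1}"
  shows "extend \<tau> -` B = (\<tau> -` (B \<inter> {0..1}) \<inter> {0..1}) \<union> (B - {0..1})"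
  using assms by (auto simp: extend_def split: if_splits)

lemma ext_mp:
  assumes "\<tau> \<in> measure_preserving unit_interval unit_interval"
    and rng: "\<And>x. x \<in> {0..1} \<Longrightarrow> \<tau> x \<in> {0..1}"
  shows "extend \<tau> \<in> measurable lborel lborel" "distr lborel lborel (extend \<tau>) = lborel"
proof -
  have meas: "\<tau> \<in> measurable unit_interval unit_interval"
    and pres: "\<And>B. B \<in> sets unit_interval \<Longrightarrow> emeasure unit_interval (\<tau> -` B \<inter> space unit_interval) = emeasure unit_interval B"
    using assms(1) unfolding measure_preserving_def by auto
  have P: "\<tau> -` (B \<inter> {0..1}) \<inter> {0..1} \<in> sets lborel"
     and E: "emeasure lborel (\<tau> -` (B \<inter> {0..1}) \<inter> {0..1}) = emeasure lborel (B \<inter> {0..1})"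
    if B: "B \<in> sets lborel" for B
  proof -
    have C: "B \<inter> {0..1} \<in> sets unit_interval" using B by (simp add: sets_Q)
    have "\<tau> -` (B \<inter> {0..1}) \<inter> space unit_interval \<in> sets unit_interval"
      using measurable_sets[OF meas C] .
    thus "\<tau> -` (B \<inter> {0..1}) \<inter> {0..1} \<in> sets lborel" by (simp add: sets_Q space_Q)
    have "emeasure unit_interval (\<tau> -` (B \<inter> {0..1}) \<inter> space unit_interval) = emeasure unit_interval (B \<inter> {0..1})"
      using pres[OF C] .
    thus "emeasure lborel (\<tau> -` (B \<inter> {0..1}) \<inter> {0..1}) = emeasure lborel (B \<inter> {0..1})"
      by (simp add: space_Q emeasure_Q)
  qed
  show m: "extend \<tau> \<in> measurable lborel lborel"
  proof (rule measurableI)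
    fix B :: "real set" assume "B \<in> sets lborel"
    hence "(\<tau> -` (B \<inter> {0..1}) \<inter> {0..1}) \<union> (B - {0..1}) \<in> sets lborel"
      using P[of B] by auto
    thus "extend \<tau> -` B \<inter> space lborel \<in> sets lborel"
      by (simp only: ext_preimage[OF rng] space_lborel space_borel Int_UNIV_right)
  qed simp
  show "distr lborel lborel (extend \<tau>) = lborel"
  proof (rule measure_eqI)
    fix B :: "real set" assume B: "B \<in> sets (distr lborel lborel (extend \<tau>))"
    hence B': "B \<in> sets lborel" by simp
    have "emeasure (distr lborel lborel (extend \<tau>)) B = emeasure lborel (extend \<tau> -` B)"
      using B' m by (simp add: emeasure_distr)
    also have "\<dots> = emeasure lborel (\<tau> -` (B \<inter> {0..1}) \<inter> {0..1}) + emeasure lborel (B - {0..1})"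
    proof -
      have "emeasure lborel (\<tau> -` (B \<inter> {0..1}) \<inter> {0..1}) + emeasure lborel (B - {0..1})
          = emeasure lborel ((\<tau> -` (B \<inter> {0..1}) \<inter> {0..1}) \<union> (B - {0..1}))"
        using P[OF B'] B' by (intro plus_emeasure) auto
      thus ?thesis by (simp only: ext_preimage[OF rng])
    qed
    also have "\<dots> = emeasure lborel (B \<inter> {0..1}) + emeasure lborel (B - {0..1})"
      using E[OF B'] by simp
    also have "\<dots> = emeasure lborel B"
      using B' by (subst plus_emeasure) (auto simp: Int_Diff_Un)
    finally show "emeasure (distr lborel lborel (extend \<tau>)) B = emeasure lborel B" .
  qed simp
qed

definition phi :: "(real \<Rightarrow> real) \<Rightarrow> real \<times> real \<Rightarrow> real \<times> real" where
  "phi \<tau> = (\<lambda>(x, y). (extend \<tau> x, extend \<tau> y))"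

lemma phi_mp:
  assumes "\<tau> \<in> measure_preserving unit_interval unit_interval"
    and rng: "\<And>x. x \<in> {0..1} \<Longrightarrow> \<tau> x \<in> {0..1}"
  shows "phi \<tau> \<in> measurable lborel lborel" "distr lborel lborel (phi \<tau>) = lborel"
proof -
  note e = ext_mp[OF assms]
  have "distr lborel lborel (extend \<tau>) \<Otimes>\<^sub>M distr lborel lborel (extend \<tau>) = distr (lborel \<Otimes>\<^sub>M lborel) (lborel \<Otimes>\<^sub>M lborel) (phi \<tau>)"
    unfolding phi_def using e by (intro pair_measure_distr) (auto simp: e(2) intro: lborel.sigma_finite_measure_axioms)
  hence d: "lborel = distr lborel lborel (phi \<tau>)" by (simp only: e(2) lborel_prod)
  have "phi \<tau> \<in> measurable (lborel \<Otimes>\<^sub>M lborel) (lborel \<Otimes>\<^sub>M lborel)"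
    unfolding phi_def using e(1) by measurable
  thus "phi \<tau> \<in> measurable lborel lborel" by (simp add: lborel_prod)
  show "distr lborel lborel (phi \<tau>) = lborel" using d by simp
qed

lemma phi_integral:
  fixes g :: "real \<times> real \<Rightarrow> real"
  assumes "\<tau> \<in> measure_preserving unit_interval unit_interval"
    and rng: "\<And>x. x \<in> {0..1} \<Longrightarrow> \<tau> x \<in> {0..1}"
    and g: "g \<in> borel_measurable lborel"
  shows "integral\<^sup>L lborel (\<lambda>z. g (phi \<tau> z)) = integral\<^sup>L lborel g"
    and "integrable lborel g \<Longrightarrow> integrable lborel (\<lambda>z. g (phi \<tau> z))"
proof -
  note p = phi_mp[OF assms(1,2)]
  show "integral\<^sup>L lborel (\<lambda>z. g (phi \<tau> z)) = integral\<^sup>L lborel g"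
    using integral_distr[OF p(1) g] p(2) by simp
  show "integrable lborel g \<Longrightarrow> integrable lborel (\<lambda>z. g (phi \<tau> z))"
    using integrable_distr_eq[OF p(1) g] p(2) by simp
qed




definition sq :: "(real \<times> real) set" where "sq = {0..1} \<times> {0..1}"

lemma sq_sets[measurable]: "sq \<in> sets (lborel :: (real \<times> real) measure)"
proof -
  have "sq \<in> sets (lborel \<Otimes>\<^sub>M lborel)" unfolding sq_def by (intro pair_measureI) auto
  thus ?thesis by (simp only: lborel_prod)
qed

lemma times_sets:
  assumes "S \<in> sets lborel" "T \<in> sets lborel"
  shows "S \<times> T \<in> sets (lborel :: (real \<times> real) measure)"
proof -
  have "S \<times> T \<in> sets (lborel \<Otimes>\<^sub>M lborel)" using assms by (intro pair_measureI) auto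
  thus ?thesis by (simp only: lborel_prod)
qed

definition Kf :: "(real \<Rightarrow> real \<Rightarrow> real) \<Rightarrow> real \<times> real \<Rightarrow> real" where
  "Kf \<kappa> z = indicator sq z *\<^sub>R (case z of (x, y) \<Rightarrow> \<kappa> x y)"

lemma Kf_integrable: "is_kernel \<kappa> \<Longrightarrow> integrable lborel (Kf \<kappa>)"
  unfolding is_kernel_def set_integrable_def Kf_def sq_def by simp

lemma Kf_meas[measurable]: "is_kernel \<kappa> \<Longrightarrow> Kf \<kappa> \<in> borel_measurable lborel"
  using Kf_integrable by blast

lemma Kf_nonneg: "is_kernel \<kappa> \<Longrightarrow> Kf \<kappa> z \<ge> 0"
  unfolding is_kernel_def Kf_def sq_def by (cases z) (auto simp: indicator_def)

lemma K_phi: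
  assumes "mp_bij \<tau>"
  shows "Kf \<kappa> (phi \<tau> z) = indicator sq z * \<kappa> (\<tau> (fst z)) (\<tau> (snd z))"
proof (cases z)
  case (Pair x y)
  show ?thesis
  proof (cases "z \<in> sq")
    case True
    then show ?thesis using Pair mp_bij_range[OF assms]
      by (auto simp: Kf_def phi_def extend_def sq_def)
  next
    case False
    then have "phi \<tau> z \<notin> sq" using Pair mp_bij_range[OF assms]
      by (auto simp: phi_def extend_def sq_def split: if_splits)
    then show ?thesis using False by (simp add: Kf_def)
  qed
qed

lemma mp_bij_pres: "mp_bij \<tau> \<Longrightarrow> \<tau> \<in> measure_preserving unit_interval unit_interval"
  unfolding mp_bij_def by simp

lemma W_int:
  assumes "n > 0" "is_kernel \<kappa>" "mp_bij \<tau>"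
  shows "integrable lborel (\<lambda>z. indicator sq z * (\<lambda>(x, y). step_kernel n A x y - \<kappa> (\<tau> x) (\<tau> y)) z)"
proof -
  have i1: "integrable lborel (\<lambda>z. indicator sq z *\<^sub>R (\<lambda>(x, y). step_kernel n A x y) z)"
    by (intro integrable_mult_indicator sq_sets step_integrable[OF assms(1)])
  have i2: "integrable lborel (\<lambda>z. Kf \<kappa> (phi \<tau> z))"
    using phi_integral(2)[OF mp_bij_pres[OF assms(3)] mp_bij_range[OF assms(3)] Kf_meas[OF assms(2)] Kf_integrable[OF assms(2)]] .
  have "(\<lambda>z. indicator sq z * (\<lambda>(x, y). step_kernel n A x y - \<kappa> (\<tau> x) (\<tau> y)) z)
     = (\<lambda>z. indicator sq z *\<^sub>R (\<lambda>(x, y). step_kernel n A x y) z - Kf \<kappa> (phi \<tau> z))"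
    by (auto simp: K_phi[OF assms(3)] algebra_simps)
  thus ?thesis using i1 i2 by simp
qed

lemma cut_norm_ge:
  fixes W :: "real \<Rightarrow> real \<Rightarrow> real"
  assumes int: "integrable lborel (\<lambda>z. indicator sq z * (\<lambda>(x, y). W x y) z)"
    and S: "S \<in> sets lborel" "S \<subseteq> {0..1}" and T: "T \<in> sets lborel" "T \<subseteq> {0..1}"
  shows "\<bar>set_lebesgue_integral lborel (S \<times> T) (\<lambda>(x, y). W x y)\<bar> \<le> cut_norm W"
proof -
  let ?F = "{\<bar>set_lebesgue_integral lborel (S \<times> T) (\<lambda>(x, y). W x y)\<bar> | S T.
      S \<in> sets lborel \<and> T \<in> sets lborel \<and> S \<subseteq> {0..1} \<and> T \<subseteq> {0..1}}"
  let ?B = "integral\<^sup>L lborel (\<lambda>z. \<bar>indicator sq z * (\<lambda>(x, y). W x y) z\<bar>)"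
  have bound: "\<bar>set_lebesgue_integral lborel (S \<times> T) (\<lambda>(x, y). W x y)\<bar> \<le> ?B"
    if S: "S \<in> sets lborel" "S \<subseteq> {0..1}" and T: "T \<in> sets lborel" "T \<subseteq> {0..1}" for S T
  proof -
    have ST: "S \<times> T \<in> sets lborel" by (rule times_sets[OF S(1) T(1)])
    have e: "(\<lambda>z. indicator (S \<times> T) z *\<^sub>R (\<lambda>(x, y). W x y) z) = (\<lambda>z. indicator (S \<times> T) z *\<^sub>R (indicator sq z * (\<lambda>(x, y). W x y) z))"
    proof (rule ext)
      fix z :: "real \<times> real"
      show "indicator (S \<times> T) z *\<^sub>R (\<lambda>(x, y). W x y) z = indicator (S \<times> T) z *\<^sub>R (indicator sq z * (\<lambda>(x, y). W x y) z)"
      proof (cases "z \<in> S \<times> T")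
        case True
        hence "z \<in> sq" using S(2) T(2) by (auto simp: sq_def)
        thus ?thesis by simp
      qed simp
    qed
    have "integrable lborel (\<lambda>z. indicator (S \<times> T) z *\<^sub>R (indicator sq z * (\<lambda>(x, y). W x y) z))"
      by (intro integrable_mult_indicator ST int)
    hence "\<bar>integral\<^sup>L lborel (\<lambda>z. indicator (S \<times> T) z *\<^sub>R (indicator sq z * (\<lambda>(x, y). W x y) z))\<bar> \<le> ?B"
      by (intro integral_abs_bound_integral integrable_abs int) (auto simp: indicator_def)
    thus ?thesis unfolding set_lebesgue_integral_def e .
  qed
  have "bdd_above ?F" using bound by (auto intro!: bdd_aboveI)
  moreover have "\<bar>set_lebesgue_integral lborel (S \<times> T) (\<lambda>(x, y). W x y)\<bar> \<in> ?F" using S T by blast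
  ultimately show ?thesis unfolding cut_norm_def by (intro cSup_upper)
qed

lemma cut_norm_nonneg:
  fixes W :: "real \<Rightarrow> real \<Rightarrow> real"
  assumes int: "integrable lborel (\<lambda>z. indicator sq z * (\<lambda>(x, y). W x y) z)"
  shows "0 \<le> cut_norm W"
  using cut_norm_ge[OF int, of "{}" "{}"] by simp




definition hM :: "(real \<Rightarrow> real \<Rightarrow> real) \<Rightarrow> real \<Rightarrow> real \<times> real \<Rightarrow> real" where
  "hM \<kappa> M z = max (Kf \<kappa> z - M * indicator sq z) 0"

lemma hM_meas[measurable]: "is_kernel \<kappa> \<Longrightarrow> hM \<kappa> M \<in> borel_measurable lborel"
  unfolding hM_def by measurable

lemma hM_bound: "is_kernel \<kappa> \<Longrightarrow> 0 \<le> M \<Longrightarrow> 0 \<le> hM \<kappa> M z \<and> hM \<kappa> M z \<le> Kf \<kappa> z"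
  using Kf_nonneg[of \<kappa> z] unfolding hM_def by (auto simp: indicator_def)

lemma hM_integrable: "is_kernel \<kappa> \<Longrightarrow> 0 \<le> M \<Longrightarrow> integrable lborel (hM \<kappa> M)"
  by (rule Bochner_Integration.integrable_bound[OF Kf_integrable]) (auto simp: hM_bound Kf_nonneg)

lemma hM_lim:
  assumes "is_kernel \<kappa>"
  shows "(\<lambda>m::nat. integral\<^sup>L lborel (hM \<kappa> (real m))) \<longlonglongrightarrow> 0"
proof -
  have "(\<lambda>m::nat. integral\<^sup>L lborel (hM \<kappa> (real m))) \<longlonglongrightarrow> integral\<^sup>L lborel (\<lambda>z::real\<times>real. 0::real)"
  proof (rule integral_dominated_convergence[where w="Kf \<kappa>" and s="\<lambda>i. hM \<kappa> (real i)" and f="\<lambda>z. 0" and M=lborel])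
    show "(\<lambda>z. 0::real) \<in> borel_measurable lborel" by simp
    show "\<And>i. hM \<kappa> (real i) \<in> borel_measurable lborel" using assms by simp
    show "integrable lborel (Kf \<kappa>)" using Kf_integrable[OF assms] .
    show "AE x in lborel. (\<lambda>i. hM \<kappa> (real i) x) \<longlonglongrightarrow> 0"
    proof (rule AE_I2)
      fix z
      obtain N :: nat where N: "Kf \<kappa> z \<le> real N" using real_arch_simple by blast
      have "eventually (\<lambda>i. hM \<kappa> (real i) z = 0) sequentially"
      proof (rule eventually_sequentiallyI[of N])
        fix i assume "N \<le> i"
        hence "Kf \<kappa> z \<le> real i" using N by (meson of_nat_le_iff order_trans)
        moreover have "z \<notin> sq \<Longrightarrow> Kf \<kappa> z = 0" by (simp add: Kf_def)
        ultimately show "hM \<kappa> (real i) z = 0" unfolding hM_def by (cases "z \<in> sq") auto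
      qed
      thus "(\<lambda>i. hM \<kappa> (real i) z) \<longlonglongrightarrow> 0" by (rule tendsto_eventually)
    qed
    show "\<And>i. AE x in lborel. norm (hM \<kappa> (real i) x) \<le> Kf \<kappa> x"
      using hM_bound[OF assms] by (intro AE_I2) auto
  qed
  thus ?thesis by simp
qed

lemma main_det:
  assumes n: "n > 0" and S: "S \<subseteq> {1..n}" and k: "is_kernel \<kappa>" and t: "mp_bij \<tau>" and M: "0 \<le> M"
  shows "(\<Sum>i\<in>S. \<Sum>j\<in>{1..n}. A i j) / real n ^ 2
    \<le> cut_norm (\<lambda>x y. step_kernel n A x y - \<kappa> (\<tau> x) (\<tau> y)) + M * real (card S) / real n
       + integral\<^sup>L lborel (hM \<kappa> M)"
proof -
  define V where "V = TS n S \<times> {0<..1::real}"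
  have Vs: "V \<in> sets lborel" unfolding V_def
    by (rule times_sets) (use TS_sets[OF finite_subset[OF S]] in auto)
  have Vsq: "V \<subseteq> sq" unfolding V_def sq_def using TS_sub[OF n S] by auto
  define st where "st = (\<lambda>z. (\<lambda>(x, y). step_kernel n A x y) z)"
  define Wz where "Wz = (\<lambda>z. (\<lambda>(x, y). step_kernel n A x y - \<kappa> (\<tau> x) (\<tau> y)) z)"
  have rng: "\<And>x. x \<in> {0..1} \<Longrightarrow> \<tau> x \<in> {0..1}" using mp_bij_range[OF t] .
  have P1: "indicator V z * st z = indicator V z * (indicator sq z * Wz z) + indicator V z * Kf \<kappa> (phi \<tau> z)" for z
  proof (cases "z \<in> V")
    case True
    hence "z \<in> sq" using Vsq by auto
    thus ?thesis using True by (cases z) (simp add: st_def Wz_def K_phi[OF t])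
  qed simp
  have iW: "integrable lborel (\<lambda>z. indicator sq z * Wz z)" unfolding Wz_def by (rule W_int[OF n k t])
  have iK: "integrable lborel (\<lambda>z. Kf \<kappa> (phi \<tau> z))"
    by (rule phi_integral(2)[OF mp_bij_pres[OF t] rng Kf_meas[OF k] Kf_integrable[OF k]])
  have i1: "integrable lborel (\<lambda>z. indicator V z * (indicator sq z * Wz z))"
    using integrable_mult_indicator[OF Vs iW] by simp
  have i2: "integrable lborel (\<lambda>z. indicator V z * Kf \<kappa> (phi \<tau> z))"
    using integrable_mult_indicator[OF Vs iK] by simp
  have iV: "integrable lborel (\<lambda>z. indicator V z :: real)"
    unfolding V_def by (rule integral_ind_TS(2)[OF n S])
  have ih: "integrable lborel (\<lambda>z. hM \<kappa> M (phi \<tau> z))"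
    by (rule phi_integral(2)[OF mp_bij_pres[OF t] rng hM_meas[OF k] hM_integrable[OF k M]])
  have "(\<Sum>i\<in>S. \<Sum>j\<in>{1..n}. A i j) / real n ^ 2 = integral\<^sup>L lborel (\<lambda>z. indicator V z * st z)"
    unfolding V_def st_def using integral_step_TS[OF n S, of A] by simp
  also have "\<dots> = integral\<^sup>L lborel (\<lambda>z. indicator V z * (indicator sq z * Wz z)) + integral\<^sup>L lborel (\<lambda>z. indicator V z * Kf \<kappa> (phi \<tau> z))"
    unfolding P1 by (rule Bochner_Integration.integral_add[OF i1 i2])
  also have "integral\<^sup>L lborel (\<lambda>z. indicator V z * (indicator sq z * Wz z)) \<le> cut_norm (\<lambda>x y. step_kernel n A x y - \<kappa> (\<tau> x) (\<tau> y))"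
  proof -
    have "integral\<^sup>L lborel (\<lambda>z. indicator V z * (indicator sq z * Wz z)) = set_lebesgue_integral lborel V (\<lambda>(x, y). step_kernel n A x y - \<kappa> (\<tau> x) (\<tau> y))"
      unfolding set_lebesgue_integral_def
    proof (intro Bochner_Integration.integral_cong refl)
      fix z show "indicator V z * (indicator sq z * Wz z) = indicator V z *\<^sub>R (\<lambda>(x, y). step_kernel n A x y - \<kappa> (\<tau> x) (\<tau> y)) z"
        using Vsq by (cases "z \<in> V") (auto simp: Wz_def)
    qed
    also have "\<dots> \<le> \<bar>set_lebesgue_integral lborel V (\<lambda>(x, y). step_kernel n A x y - \<kappa> (\<tau> x) (\<tau> y))\<bar>" by simp
    also have "\<dots> \<le> cut_norm (\<lambda>x y. step_kernel n A x y - \<kappa> (\<tau> x) (\<tau> y))"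
      unfolding V_def
      by (rule cut_norm_ge[where W="\<lambda>x y. step_kernel n A x y - \<kappa> (\<tau> x) (\<tau> y)"])
         (use W_int[OF n k t] TS_sub[OF n S] TS_sets[OF finite_subset[OF S]] in auto)
    finally show ?thesis .
  qed
  also have "integral\<^sup>L lborel (\<lambda>z. indicator V z * Kf \<kappa> (phi \<tau> z)) \<le> integral\<^sup>L lborel (\<lambda>z. M * indicator V z + hM \<kappa> M (phi \<tau> z))"
  proof (rule integral_mono[OF i2])
    show "integrable lborel (\<lambda>z. M * indicator V z + hM \<kappa> M (phi \<tau> z))"
      using iV ih by auto
    fix z
    show "indicator V z * Kf \<kappa> (phi \<tau> z) \<le> M * indicator V z + hM \<kappa> M (phi \<tau> z)"
    proof (cases "z \<in> V")
      case True
      hence "z \<in> sq" using Vsq by auto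
      hence "phi \<tau> z \<in> sq" using rng by (cases z) (auto simp: phi_def extend_def sq_def)
      thus ?thesis using True by (simp add: hM_def)
    next
      case False
      thus ?thesis using hM_bound[OF k M, of "phi \<tau> z"] by simp
    qed
  qed
  also have "integral\<^sup>L lborel (\<lambda>z. M * indicator V z + hM \<kappa> M (phi \<tau> z)) = M * real (card S) / real n + integral\<^sup>L lborel (hM \<kappa> M)"
  proof -
    have "integral\<^sup>L lborel (\<lambda>z. M * indicator V z + hM \<kappa> M (phi \<tau> z)) = M * integral\<^sup>L lborel (\<lambda>z. indicator V z :: real) + integral\<^sup>L lborel (\<lambda>z. hM \<kappa> M (phi \<tau> z))"
      using iV ih by simp
    also have "integral\<^sup>L lborel (\<lambda>z. hM \<kappa> M (phi \<tau> z)) = integral\<^sup>L lborel (hM \<kappa> M)"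
      by (rule phi_integral(1)[OF mp_bij_pres[OF t] rng hM_meas[OF k]])
    also have "integral\<^sup>L lborel (\<lambda>z. indicator V z :: real) = real (card S) / real n"
      unfolding V_def by (rule integral_ind_TS(1)[OF n S])
    finally show ?thesis by simp
  qed
  finally show ?thesis by linarith
qed




definition Pm :: "nat \<Rightarrow> nat set \<Rightarrow> (nat \<times> nat) set" where
  "Pm n S = {p \<in> vpairs n. fst p \<in> S \<or> snd p \<in> S}"

definition qp :: "nat \<Rightarrow> (nat \<Rightarrow> nat \<Rightarrow> real) \<Rightarrow> nat \<times> nat \<Rightarrow> real" where
  "qp n A p = min (A (fst p) (snd p) / real n) 1"

lemma vpairs_sub: "vpairs n \<subseteq> {1..n} \<times> {1..n}"
  unfolding vpairs_def by auto

lemma finite_vpairs[simp]: "finite (vpairs n)"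
  by (rule finite_subset[OF vpairs_sub]) auto

lemma finite_Pm[simp]: "finite (Pm n S)"
  unfolding Pm_def by simp

lemma edges_met_sum:
  "real (edges_met n e S) = (\<Sum>p\<in>Pm n S. if e p then 1 else 0)"
proof -
  have "{(i, j) \<in> vpairs n. e (i, j) \<and> (i \<in> S \<or> j \<in> S)} = {p \<in> Pm n S. e p}"
    unfolding Pm_def by auto
  hence "real (edges_met n e S) = real (card {p \<in> Pm n S. e p})" unfolding edges_met_def by simp
  also have "\<dots> = (\<Sum>p\<in>{p \<in> Pm n S. e p}. 1)" by simp
  also have "\<dots> = (\<Sum>p\<in>Pm n S. if e p then 1 else 0)"
    by (rule sum.inter_filter) (simp add: Pm_def)
  finally show ?thesis .
qed

lemma rand_graph_integrable:
  fixes f :: "(nat \<times> nat \<Rightarrow> bool) \<Rightarrow> real"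
  shows "integrable (measure_pmf (rand_graph n A)) f"
proof -
  have "finite (set_pmf (rand_graph n A))"
  proof -
    have "set_pmf (rand_graph n A) \<subseteq> {f. \<forall>x. x \<notin> vpairs n \<longrightarrow> f x = False}"
      unfolding rand_graph_def by (rule set_Pi_pmf_subset) simp
    moreover have "finite {f :: nat \<times> nat \<Rightarrow> bool. \<forall>x. x \<notin> vpairs n \<longrightarrow> f x = False}"
    proof -
      have "{f :: nat \<times> nat \<Rightarrow> bool. \<forall>x. x \<notin> vpairs n \<longrightarrow> f x = False} \<subseteq> (\<lambda>B x. x \<in> B) ` Pow (vpairs n)"
      proof
        fix f :: "nat \<times> nat \<Rightarrow> bool" assume "f \<in> {f. \<forall>x. x \<notin> vpairs n \<longrightarrow> f x = False}"
        hence h: "\<forall>x. x \<notin> vpairs n \<longrightarrow> f x = False" by blast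
        have "f = (\<lambda>x. x \<in> {x \<in> vpairs n. f x})"
        proof (rule ext)
          fix x show "f x = (x \<in> {x \<in> vpairs n. f x})"
          proof (cases "x \<in> vpairs n")
            case False thus ?thesis using h by blast
          qed simp
        qed
        thus "f \<in> (\<lambda>B x. x \<in> B) ` Pow (vpairs n)" by blast
      qed
      thus ?thesis by (rule finite_subset) simp
    qed
    ultimately show ?thesis by (rule finite_subset)
  qed
  thus ?thesis by (rule integrable_measure_pmf_finite)
qed

lemma chernoff:
  assumes n: "n > 0" and A: "\<forall>i\<in>{1..n}. \<forall>j\<in>{1..n}. 0 \<le> A i j"
  shows "measure_pmf.prob (rand_graph n A) {e. real (edges_met n e S) > a}
     \<le> exp ((exp 1 - 1) * (\<Sum>p\<in>Pm n S. qp n A p) - a)"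
proof -
  let ?G = "rand_graph n A"
  define f where "f = (\<lambda>p (v::bool). if p \<in> Pm n S then exp (if v then 1 else 0) else (1::real))"
  have q01: "0 \<le> qp n A p \<and> qp n A p \<le> 1" if "p \<in> vpairs n" for p
    using that A vpairs_sub[of n] by (auto simp: qp_def)
  have expX: "exp (real (edges_met n e S)) = (\<Prod>p\<in>vpairs n. f p (e p))" for e
  proof -
    have "exp (real (edges_met n e S)) = (\<Prod>p\<in>Pm n S. exp (if e p then 1 else 0))"
      unfolding edges_met_sum by (rule exp_sum) simp
    also have "\<dots> = (\<Prod>p\<in>vpairs n. f p (e p))"
      unfolding Pm_def f_def by (subst prod.inter_filter) auto
    finally show ?thesis .
  qed
  have E: "measure_pmf.expectation ?G (\<lambda>e. exp (real (edges_met n e S)))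
      = (\<Prod>p\<in>vpairs n. measure_pmf.expectation (bernoulli_pmf (qp n A p)) (f p))"
  proof -
    have "measure_pmf.expectation ?G (\<lambda>e. exp (real (edges_met n e S)))
       = measure_pmf.expectation (Pi_pmf (vpairs n) False (\<lambda>p. bernoulli_pmf (qp n A p))) (\<lambda>e. \<Prod>p\<in>vpairs n. f p (e p))"
    proof -
      have "(\<lambda>(i, j). bernoulli_pmf (min (A i j / real n) 1)) = (\<lambda>p. bernoulli_pmf (qp n A p))"
        by (auto simp: qp_def)
      thus ?thesis unfolding expX rand_graph_def by simp
    qed
    also have "\<dots> = (\<Prod>p\<in>vpairs n. measure_pmf.expectation (bernoulli_pmf (qp n A p)) (f p))"
      by (rule expectation_prod_Pi_pmf) (auto simp: f_def intro: integrable_measure_pmf_finite)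
    finally show ?thesis .
  qed
  have "measure_pmf.expectation ?G (\<lambda>e. exp (real (edges_met n e S))) \<le> (\<Prod>p\<in>vpairs n. if p \<in> Pm n S then exp ((exp 1 - 1) * qp n A p) else 1)"
    unfolding E
  proof (rule prod_mono)
    fix p assume p: "p \<in> vpairs n"
    have ex: "measure_pmf.expectation (bernoulli_pmf (qp n A p)) (f p) = (if p \<in> Pm n S then 1 + (exp 1 - 1) * qp n A p else 1)"
      using q01[OF p] by (simp add: f_def algebra_simps)
    show "0 \<le> measure_pmf.expectation (bernoulli_pmf (qp n A p)) (f p) \<and>
        measure_pmf.expectation (bernoulli_pmf (qp n A p)) (f p) \<le> (if p \<in> Pm n S then exp ((exp 1 - 1) * qp n A p) else 1)"
      unfolding ex using q01[OF p] exp_ge_add_one_self[of "(exp 1 - 1) * qp n A p"]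
      by (auto intro!: add_nonneg_nonneg mult_nonneg_nonneg simp: exp_ge_zero)
  qed
  also have "\<dots> = (\<Prod>p\<in>Pm n S. exp ((exp 1 - 1) * qp n A p))"
    unfolding Pm_def by (subst prod.inter_filter) auto
  also have "\<dots> = exp ((exp 1 - 1) * (\<Sum>p\<in>Pm n S. qp n A p))"
    by (simp add: exp_sum sum_distrib_left)
  finally have EB: "measure_pmf.expectation ?G (\<lambda>e. exp (real (edges_met n e S))) \<le> exp ((exp 1 - 1) * (\<Sum>p\<in>Pm n S. qp n A p))" .
  have "exp a * measure_pmf.prob ?G {e. real (edges_met n e S) > a}
      = measure_pmf.expectation ?G (\<lambda>e. exp a * indicator {e. real (edges_met n e S) > a} e)"
    by (simp add: integral_indicator)
  also have "\<dots> \<le> measure_pmf.expectation ?G (\<lambda>e. exp (real (edges_met n e S)))"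
    by (rule integral_mono[OF rand_graph_integrable rand_graph_integrable]) (auto simp: indicator_def)
  also have "\<dots> \<le> exp ((exp 1 - 1) * (\<Sum>p\<in>Pm n S. qp n A p))" by (rule EB)
  finally have "exp a * measure_pmf.prob ?G {e. real (edges_met n e S) > a} \<le> exp ((exp 1 - 1) * (\<Sum>p\<in>Pm n S. qp n A p))" .
  hence "measure_pmf.prob ?G {e. real (edges_met n e S) > a} \<le> exp ((exp 1 - 1) * (\<Sum>p\<in>Pm n S. qp n A p)) / exp a"
    by (simp add: field_simps mult.commute)
  thus ?thesis by (simp add: exp_diff)
qed




lemma sum_Pow_power:
  fixes t :: real
  assumes "finite A"
  shows "(\<Sum>B\<in>Pow A. t ^ card B) = (1 + t) ^ card A"
  using assms
proof (induction A rule: finite_induct)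
  case empty
  then show ?case by simp
next
  case (insert a A)
  have disj: "Pow A \<inter> insert a ` Pow A = {}" using insert.hyps by auto
  have inj: "inj_on (insert a) (Pow A)" unfolding inj_on_def
    by (metis Diff_insert_absorb PowD in_mono insert.hyps(2))
  have c: "card (insert a B) = Suc (card B)" if "B \<in> Pow A" for B
  proof -
    have "finite B" "a \<notin> B" using that insert.hyps finite_subset by auto
    thus ?thesis by simp
  qed
  have "(\<Sum>B\<in>Pow (insert a A). t ^ card B) = (\<Sum>B\<in>Pow A. t ^ card B) + (\<Sum>B\<in>insert a ` Pow A. t ^ card B)"
    unfolding Pow_insert using insert.hyps disj by (intro sum.union_disjoint) auto
  also have "(\<Sum>B\<in>insert a ` Pow A. t ^ card B) = (\<Sum>B\<in>Pow A. t ^ card (insert a B))"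
    by (rule sum.reindex[OF inj, unfolded comp_def])
  also have "\<dots> = (\<Sum>B\<in>Pow A. t * t ^ card B)" by (intro sum.cong refl) (simp add: c)
  also have "\<dots> = t * (1 + t) ^ card A" by (simp only: sum_distrib_left[symmetric] insert.IH)
  finally show ?case using insert.hyps insert.IH by (simp add: algebra_simps)
qed

lemma pair_sum_bound:
  assumes n: "n > 0" and S: "S \<subseteq> {1..n}"
    and A: "\<forall>i\<in>{1..n}. \<forall>j\<in>{1..n}. 0 \<le> A i j \<and> A i j = A j i"
  shows "(\<Sum>p\<in>Pm n S. qp n A p) \<le> (\<Sum>i\<in>S. \<Sum>j\<in>{1..n}. A i j) / real n"
proof -
  define g where "g = (\<lambda>p. if fst p \<in> S then A (fst p) (snd p) else 0)"
  have vn: "\<And>p. p \<in> vpairs n \<Longrightarrow> fst p \<in> {1..n} \<and> snd p \<in> {1..n}" unfolding vpairs_def by auto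
  have g0: "0 \<le> g p" if "p \<in> {1..n} \<times> {1..n}" for p using that A by (auto simp: g_def)
  have "(\<Sum>p\<in>Pm n S. qp n A p) \<le> (\<Sum>p\<in>Pm n S. A (fst p) (snd p) / real n)"
    by (intro sum_mono) (simp add: qp_def)
  also have "\<dots> \<le> (\<Sum>p\<in>vpairs n. (g p + g (snd p, fst p)) / real n)"
  proof -
    have "(\<Sum>p\<in>Pm n S. A (fst p) (snd p) / real n) = (\<Sum>p\<in>vpairs n. if fst p \<in> S \<or> snd p \<in> S then A (fst p) (snd p) / real n else 0)"
      unfolding Pm_def by (rule sum.inter_filter) simp
    also have "\<dots> \<le> (\<Sum>p\<in>vpairs n. (g p + g (snd p, fst p)) / real n)"
    proof (rule sum_mono)
      fix p assume p: "p \<in> vpairs n"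
      have a: "0 \<le> A (fst p) (snd p)" "A (snd p) (fst p) = A (fst p) (snd p)" using vn[OF p] A by auto
      show "(if fst p \<in> S \<or> snd p \<in> S then A (fst p) (snd p) / real n else 0) \<le> (g p + g (snd p, fst p)) / real n"
        using a n by (auto simp: g_def divide_right_mono)
    qed
    finally show ?thesis .
  qed
  also have "\<dots> = ((\<Sum>p\<in>vpairs n. g p) + (\<Sum>p\<in>vpairs n. g (snd p, fst p))) / real n"
    by (simp only: sum_divide_distrib[symmetric] sum.distrib)
  also have "(\<Sum>p\<in>vpairs n. g (snd p, fst p)) = (\<Sum>p\<in>(\<lambda>p. (snd p, fst p)) ` vpairs n. g p)"
    by (rule sum.reindex[symmetric, unfolded comp_def]) (auto simp: inj_on_def)
  also have "(\<Sum>p\<in>vpairs n. g p) + (\<Sum>p\<in>(\<lambda>p. (snd p, fst p)) ` vpairs n. g p) = (\<Sum>p\<in>vpairs n \<union> (\<lambda>p. (snd p, fst p)) ` vpairs n. g p)"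
  proof (rule sum.union_disjoint[symmetric])
    show "vpairs n \<inter> (\<lambda>p. (snd p, fst p)) ` vpairs n = {}" by (auto simp: vpairs_def)
  qed simp_all
  also have "\<dots> \<le> (\<Sum>p\<in>{1..n} \<times> {1..n}. g p)"
    by (rule sum_mono2) (use vpairs_sub[of n] g0 in auto)
  also have "\<dots> = (\<Sum>i\<in>{1..n}. \<Sum>j\<in>{1..n}. g (i, j))" by (simp add: sum.cartesian_product)
  also have "\<dots> = (\<Sum>i\<in>{1..n}. if i \<in> S then (\<Sum>j\<in>{1..n}. A i j) else 0)"
    by (intro sum.cong refl) (simp add: g_def)
  also have "\<dots> = (\<Sum>i\<in>S. \<Sum>j\<in>{1..n}. A i j)"
    using S by (simp add: sum.inter_restrict[symmetric] Int_absorb1)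
  finally show ?thesis using n by (simp add: divide_right_mono)
qed

lemma mp_bij_id: "mp_bij (\<lambda>x. x)"
proof -
  have inv: "inv_into {0..1} (\<lambda>x. x) x = x" if "x \<in> {0..1::real}" for x
    using that by (simp add: inv_into_f_f)
  have mpid: "(\<lambda>x. x) \<in> measure_preserving unit_interval unit_interval"
    unfolding measure_preserving_def
    using sets.sets_into_space by (auto simp: Int_absorb2)
  have "inv_into {0..1} (\<lambda>x. x) \<in> measure_preserving unit_interval unit_interval"
  proof -
    have m: "inv_into {0..1} (\<lambda>x. x) \<in> unit_interval \<rightarrow>\<^sub>M unit_interval"
      using measurable_ident by (subst measurable_cong[where g="\<lambda>x. x"]) (auto simp: space_Q inv)
    have "inv_into {0..1} (\<lambda>x. x) -` B \<inter> space unit_interval = B" if "B \<in> sets unit_interval" for B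
      using that inv sets_Q[of B] by (auto simp: space_Q)
    thus ?thesis using m unfolding measure_preserving_def by auto
  qed
  thus ?thesis unfolding mp_bij_def using mpid by (simp add: bij_betw_id[unfolded id_def])
qed




lemma count_bound:
  fixes t \<gamma> :: real
  assumes t: "0 < t" "t < 1" and g: "0 \<le> \<gamma>"
  shows "real (card {S. S \<subseteq> {1..n} \<and> real (card S) \<le> \<gamma> * real n})
     \<le> exp (t * real n + \<gamma> * real n * (- ln t))"
proof -
  define F where "F = {S. S \<subseteq> {1..n} \<and> real (card S) \<le> \<gamma> * real n}"
  have FP: "F \<subseteq> Pow {1..n}" unfolding F_def by auto
  have fin: "finite F" using FP by (rule finite_subset) simp
  have lt: "ln t < 0" using t by simp
  have one: "1 \<le> t ^ card S * exp (\<gamma> * real n * (- ln t))" if "S \<in> F" for S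
  proof -
    have "t ^ card S = exp (real (card S) * ln t)" using t by (simp add: exp_of_nat_mult)
    moreover have "real (card S) * ln t \<ge> \<gamma> * real n * ln t"
      using that lt unfolding F_def by (intro mult_right_mono_neg) auto
    ultimately have "t ^ card S * exp (\<gamma> * real n * (- ln t)) \<ge> exp (\<gamma> * real n * ln t) * exp (\<gamma> * real n * (- ln t))"
      by (intro mult_right_mono) auto
    also have "exp (\<gamma> * real n * ln t) * exp (\<gamma> * real n * (- ln t)) = 1"
      by (simp add: exp_add[symmetric])
    finally show ?thesis .
  qed
  have "real (card F) = (\<Sum>S\<in>F. 1)" by simp
  also have "\<dots> \<le> (\<Sum>S\<in>F. t ^ card S * exp (\<gamma> * real n * (- ln t)))"
    by (rule sum_mono) (rule one)
  also have "\<dots> \<le> (\<Sum>S\<in>Pow {1..n}. t ^ card S * exp (\<gamma> * real n * (- ln t)))"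
    by (rule sum_mono2) (use FP t in auto)
  also have "\<dots> = (1 + t) ^ n * exp (\<gamma> * real n * (- ln t))"
    by (simp add: sum_distrib_right[symmetric] sum_Pow_power)
  also have "(1 + t) ^ n \<le> exp (t * real n)"
  proof -
    have "(1 + t) ^ n \<le> exp t ^ n" using t by (intro power_mono) (auto simp: exp_ge_add_one_self add.commute)
    thus ?thesis by (simp add: exp_of_nat_mult[symmetric] mult.commute)
  qed
  hence "(1 + t) ^ n * exp (\<gamma> * real n * (- ln t)) \<le> exp (t * real n) * exp (\<gamma> * real n * (- ln t))"
    by (intro mult_right_mono) auto
  also have "\<dots> = exp (t * real n + \<gamma> * real n * (- ln t))" by (rule exp_add[symmetric])
  finally show ?thesis unfolding F_def .
qed

lemma cut_dist_obtain:
  assumes "cut_dist n A \<kappa> < c"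
  obtains \<tau> where "mp_bij \<tau>" "cut_norm (\<lambda>x y. step_kernel n A x y - \<kappa> (\<tau> x) (\<tau> y)) < c"
proof -
  have ne: "{cut_norm (\<lambda>x y. step_kernel n A x y - \<kappa> (\<tau> x) (\<tau> y)) | \<tau>. mp_bij \<tau>} \<noteq> {}"
    using mp_bij_id by blast
  from cInf_lessD[OF ne assms[unfolded cut_dist_def]] that show ?thesis by blast
qed

lemma bound_n:
  assumes n: "n > 0" and k: "is_kernel \<kappa>" and d: "\<delta> > 0"
    and A: "\<forall>i\<in>{1..n}. \<forall>j\<in>{1..n}. 0 \<le> A i j \<and> A i j = A j i"
    and cd: "cut_dist n A \<kappa> < \<delta> / 12"
    and M: "0 \<le> M" and hMb: "integral\<^sup>L lborel (hM \<kappa> M) < \<delta> / 12"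
    and t: "0 < t" "t < 1" "t \<le> \<delta> / 8"
    and g: "0 < \<gamma>" "\<gamma> * M \<le> \<delta> / 12" "\<gamma> * (- ln t) \<le> \<delta> / 8"
  shows "1 - exp (- (\<delta> / 4) * real n) \<le> measure_pmf.prob (rand_graph n A)
        {e. \<forall>S \<subseteq> {1..n}. real (card S) \<le> \<gamma> * real n \<longrightarrow> real (edges_met n e S) \<le> \<delta> * real n}"
proof -
  obtain \<tau> where tau: "mp_bij \<tau>" and cn: "cut_norm (\<lambda>x y. step_kernel n A x y - \<kappa> (\<tau> x) (\<tau> y)) < \<delta> / 12"
    using cut_dist_obtain[OF cd] by blast
  have A0: "\<forall>i\<in>{1..n}. \<forall>j\<in>{1..n}. 0 \<le> A i j" using A by blast
  define F where "F = {S. S \<subseteq> {1..n} \<and> real (card S) \<le> \<gamma> * real n}"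
  have finF: "finite F" unfolding F_def by (rule finite_subset[of _ "Pow {1..n}"]) auto
  have mu: "(\<Sum>p\<in>Pm n S. qp n A p) \<le> \<delta> * real n / 4" if S: "S \<in> F" for S
  proof -
    have S1: "S \<subseteq> {1..n}" and S2: "real (card S) \<le> \<gamma> * real n" using S unfolding F_def by auto
    have "M * real (card S) / real n \<le> M * \<gamma>"
      using S2 n M by (simp add: divide_le_eq mult_left_mono mult.assoc)
    hence "(\<Sum>i\<in>S. \<Sum>j\<in>{1..n}. A i j) / real n ^ 2 \<le> \<delta> / 4"
      using main_det[OF n S1 k tau M, of A] cn hMb g(2) by (simp add: mult.commute)
    hence "(\<Sum>i\<in>S. \<Sum>j\<in>{1..n}. A i j) / real n \<le> \<delta> * real n / 4"
      using n by (simp add: power2_eq_square field_simps)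
    thus ?thesis using pair_sum_bound[OF n S1 A] by linarith
  qed
  have pS: "measure_pmf.prob (rand_graph n A) {e. real (edges_met n e S) > \<delta> * real n} \<le> exp (- (\<delta> / 2) * real n)"
    if S: "S \<in> F" for S
  proof -
    have q0: "0 \<le> (\<Sum>p\<in>Pm n S. qp n A p)"
      using A0 by (intro sum_nonneg) (auto simp: qp_def Pm_def vpairs_def)
    have "(exp 1 - 1) * (\<Sum>p\<in>Pm n S. qp n A p) \<le> 2 * (\<Sum>p\<in>Pm n S. qp n A p)"
      using exp_le q0 by (intro mult_right_mono) auto
    hence "(exp 1 - 1) * (\<Sum>p\<in>Pm n S. qp n A p) - \<delta> * real n \<le> - (\<delta> / 2) * real n"
      using mu[OF S] by linarith
    thus ?thesis using chernoff[OF n A0, where S=S and a="\<delta> * real n"] by (meson exp_le_cancel_iff order_trans)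
  qed
  define Bad where "Bad = (\<Union>S\<in>F. {e. real (edges_met n e S) > \<delta> * real n})"
  have Good: "{e. \<forall>S \<subseteq> {1..n}. real (card S) \<le> \<gamma> * real n \<longrightarrow> real (edges_met n e S) \<le> \<delta> * real n}
      = space (measure_pmf (rand_graph n A)) - Bad"
    unfolding Bad_def F_def by (auto simp: not_le)
  have "measure_pmf.prob (rand_graph n A) Bad \<le> (\<Sum>S\<in>F. measure_pmf.prob (rand_graph n A) {e. real (edges_met n e S) > \<delta> * real n})"
    unfolding Bad_def by (rule measure_pmf.finite_measure_subadditive_finite[OF finF]) auto
  also have "\<dots> \<le> (\<Sum>S\<in>F. exp (- (\<delta> / 2) * real n))" by (rule sum_mono) (rule pS)
  also have "\<dots> = real (card F) * exp (- (\<delta> / 2) * real n)" by simp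
  also have "\<dots> \<le> exp (t * real n + \<gamma> * real n * (- ln t)) * exp (- (\<delta> / 2) * real n)"
    unfolding F_def by (intro mult_right_mono count_bound) (use t g in auto)
  also have "\<dots> \<le> exp (- (\<delta> / 4) * real n)"
  proof -
    have "t * real n \<le> \<delta> / 8 * real n" using t by (intro mult_right_mono) auto
    moreover have "\<gamma> * real n * (- ln t) \<le> \<delta> / 8 * real n"
    proof -
      have "\<gamma> * (- ln t) * real n \<le> \<delta> / 8 * real n" using g(3) by (intro mult_right_mono) auto
      thus ?thesis by (simp add: algebra_simps)
    qed
    ultimately have "t * real n + \<gamma> * real n * (- ln t) + (- (\<delta> / 2) * real n) \<le> - (\<delta> / 4) * real n"
      by (simp add: algebra_simps)
    thus ?thesis by (simp add: exp_add[symmetric])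
  qed
  finally have "measure_pmf.prob (rand_graph n A) Bad \<le> exp (- (\<delta> / 4) * real n)" .
  moreover have "measure_pmf.prob (rand_graph n A) (space (measure_pmf (rand_graph n A)) - Bad) = 1 - measure_pmf.prob (rand_graph n A) Bad"
    by (rule measure_pmf.prob_compl) simp
  ultimately show ?thesis unfolding Good by linarith
qed

lemma exp_lim: "d > 0 \<Longrightarrow> (\<lambda>n::nat. exp (- d * real n)) \<longlonglongrightarrow> 0"
proof -
  assume d: "d > 0"
  have "(\<lambda>n::nat. exp (- d) ^ n) \<longlonglongrightarrow> 0" using d by (intro LIMSEQ_power_zero) simp
  moreover have "exp (- d * real n) = exp (- d) ^ n" for n
    by (simp add: exp_of_nat_mult[symmetric] mult.commute)
  ultimately show ?thesis by simp
qed

theorem mainTheorem19: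
  fixes \<kappa> :: "real \<Rightarrow> real \<Rightarrow> real" and \<delta> :: real
  assumes "is_kernel \<kappa>" and "\<delta> > 0"
  shows "\<exists>\<gamma>>0. \<forall>A :: nat \<Rightarrow> nat \<Rightarrow> nat \<Rightarrow> real.
    (\<forall>n. \<forall>i\<in>{1..n}. \<forall>j\<in>{1..n}. 0 \<le> A n i j \<and> A n i j = A n j i) \<longrightarrow>
    (\<lambda>n. cut_dist n (A n) \<kappa>) \<longlonglongrightarrow> 0 \<longrightarrow>
    (\<lambda>n. measure_pmf.prob (rand_graph n (A n))
        {e. \<forall>S \<subseteq> {1..n}. real (card S) \<le> \<gamma> * real n \<longrightarrow>
              real (edges_met n e S) \<le> \<delta> * real n}) \<longlonglongrightarrow> 1"
proof -
  note k = assms(1) and d = assms(2)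
  have "eventually (\<lambda>m. integral\<^sup>L lborel (hM \<kappa> (real m)) < \<delta> / 12) sequentially"
    by (rule order_tendstoD(2)[OF hM_lim[OF k]]) (use d in simp)
  then obtain m where hm: "integral\<^sup>L lborel (hM \<kappa> (real m)) < \<delta> / 12"
    unfolding eventually_sequentially by blast
  define M where "M = real m"
  have M: "0 \<le> M" unfolding M_def by simp
  define t where "t = min (\<delta> / 8) (1 / 2)"
  have t: "0 < t" "t < 1" "t \<le> \<delta> / 8" unfolding t_def using d by auto
  have lt: "0 < - ln t" using t by simp
  define \<gamma> where "\<gamma> = min (\<delta> / (12 * (M + 1))) (\<delta> / (8 * (- ln t)))"
  have g0: "0 < \<gamma>"
  proof -
    have "0 < \<delta> / (12 * (M + 1))" using d M by simp
    moreover have "0 < \<delta> / (8 * (- ln t))" using d lt by (intro divide_pos_pos) auto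
    ultimately show ?thesis unfolding \<gamma>_def by linarith
  qed
  have g1: "\<gamma> * M \<le> \<delta> / 12"
  proof -
    have "\<gamma> * M \<le> \<delta> / (12 * (M + 1)) * M" unfolding \<gamma>_def using M by (intro mult_right_mono) auto
    also have "\<dots> \<le> \<delta> / 12" using d M by (simp add: field_simps)
    finally show ?thesis .
  qed
  have g2: "\<gamma> * (- ln t) \<le> \<delta> / 8"
  proof -
    have "\<gamma> * (- ln t) \<le> \<delta> / (8 * (- ln t)) * (- ln t)" unfolding \<gamma>_def using lt by (intro mult_right_mono) auto
    also have "\<dots> = \<delta> / 8" using lt by (simp add: field_simps)
    finally show ?thesis .
  qed
  show ?thesis
  proof (intro exI[of _ \<gamma>] conjI allI impI)
    show "0 < \<gamma>" by (rule g0)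
    fix A :: "nat \<Rightarrow> nat \<Rightarrow> nat \<Rightarrow> real"
    assume sym: "\<forall>n. \<forall>i\<in>{1..n}. \<forall>j\<in>{1..n}. 0 \<le> A n i j \<and> A n i j = A n j i"
      and conv: "(\<lambda>n. cut_dist n (A n) \<kappa>) \<longlonglongrightarrow> 0"
    let ?P = "\<lambda>n. measure_pmf.prob (rand_graph n (A n))
        {e. \<forall>S \<subseteq> {1..n}. real (card S) \<le> \<gamma> * real n \<longrightarrow>
              real (edges_met n e S) \<le> \<delta> * real n}"
    show "?P \<longlonglongrightarrow> 1"
    proof (rule tendsto_sandwich[of "\<lambda>n. 1 - exp (- (\<delta> / 4) * real n)" _ _ "\<lambda>n. 1"])
      have e1: "eventually (\<lambda>n. cut_dist n (A n) \<kappa> < \<delta> / 12) sequentially"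
        by (rule order_tendstoD(2)[OF conv]) (use d in simp)
      have e2: "eventually (\<lambda>n. n > 0) sequentially" by (rule eventually_gt_at_top)
      show "eventually (\<lambda>n. 1 - exp (- (\<delta> / 4) * real n) \<le> ?P n) sequentially"
        using e1 e2
      proof eventually_elim
        case (elim n)
        show ?case
          using bound_n[OF elim(2) k d _ elim(1) M _ t g0 g1 g2] sym hm unfolding M_def by blast
      qed
      show "eventually (\<lambda>n. ?P n \<le> 1) sequentially" by (intro always_eventually allI measure_pmf.prob_le_1)
      have "(\<lambda>n. 1 - exp (- (\<delta> / 4) * real n)) \<longlonglongrightarrow> 1 - 0"
        by (intro tendsto_diff tendsto_const exp_lim) (use d in simp)
      thus "(\<lambda>n. 1 - exp (- (\<delta> / 4) * real n)) \<longlonglongrightarrow> 1" by simp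
    qed simp
  qed
qed


end
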